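(* Let $q \geq 1$ and let $k$ be a positive integer with $k < n$. Let $\boldsymbol{B}$ be a dictionary as described in the context, and assume that every signal $\boldsymbol{y}\in\mathbb{R}^D$ that admits a $k$-block-sparse representation admits a unique one. If $$(2k-1)\,\mu_S < \frac{1-\epsilon'_q}{1+\epsilon'_q},$$ then for every $\Lambda_k\subseteq\{1,\dots,n\}$ with $|\Lambda_k|=k$ and every $\boldsymbol{y}\in\bigoplus_{i\in\Lambda_k}\mathcal{S}_i$, every optimal solution $\boldsymbol{c}^*$ of $P'_{\ell_q/\ell_1}(\boldsymbol{y})$ satisfies $\boldsymbol{B}[i]\boldsymbol{c}^*[i]=\boldsymbol{0}$ for all $i\notin\Lambda_k$; i.e. the solution of $P'_{\ell_q/\ell_1}$ is equivalent to that of $P'_{\ell_q/\ell_0}$.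
   Context: $\boldsymbol{B} = [\boldsymbol{B}[1]\ \cdots\ \boldsymbol{B}[n]] \in \mathbb{R}^{D\times N}$ has unit-Euclidean-norm columns, blocks $\boldsymbol{B}[i] \in \mathbb{R}^{D\times m_i}$ (possibly with linearly dependent columns); $\mathcal{S}_i = \operatorname{span}(\boldsymbol{B}[i])$, and $\mathcal{S}_i\cap\mathcal{S}_j = \{0\}$ for $i\ne j$. Vectors $\boldsymbol{c}\in\mathbb{R}^N$ are written $(\boldsymbol{c}[1];\dots;\boldsymbol{c}[n])$, $\boldsymbol{c}[i]\in\mathbb{R}^{m_i}$. A $k$-block-sparse representation of $\boldsymbol{y}$ is $\boldsymbol{y}=\sum_{i\in\Lambda}\boldsymbol{s}_i$ with $|\Lambda|\le k$, $\boldsymbol{s}_i\in\mathcal{S}_i\setminus\{0\}$; uniqueness means any two have the same $\Lambda$ and the same $\boldsymbol{s}_i$. $P'_{\ell_q/\ell_1}(\boldsymbol{y})$: $\min\sum_i\|\boldsymbol{B}[i]\boldsymbol{c}[i]\|_q$ s.t. $\boldsymbol{y}=\boldsymbol{B}\boldsymbol{c}$; $P'_{\ell_q/\ell_0}(\boldsymbol{y})$: minimize $\#\{i:\boldsymbol{B}[i]\boldsymbol{c}[i]\ne 0\}$ s.t. $\boldsymbol{y}=\boldsymbol{B}\boldsymbol{c}$. Subspace coherence: $\mu(\mathcal{S}_i,\mathcal{S}_j)=\max_{0\ne\boldsymbol{x}\in\mathcal{S}_i,\,0\ne\boldsymbol{z}\in\mathcal{S}_j}\frac{|\boldsymbol{x}^\top\boldsymbol{z}|}{\|\boldsymbol{x}\|_2\|\boldsymbol{z}\|_2}$;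 $\mu_S=\max_{i\ne j}\mu(\mathcal{S}_i,\mathcal{S}_j)$. $\epsilon'_q$: the smallest constant such that $(1-\epsilon'_q)\|\boldsymbol{B}[i]\boldsymbol{c}[i]\|_q^2\le\|\boldsymbol{B}[i]\boldsymbol{c}[i]\|_2^2\le(1+\epsilon'_q)\|\boldsymbol{B}[i]\boldsymbol{c}[i]\|_q^2$ for all $i$ and all $\boldsymbol{c}[i]$. *)

theory Defs
  imports "HOL-Analysis.Analysis"
begin

text \<open>Block dictionary: blocks are indexed by i < n; block i has columns
  B i j :: real^'d for j < m i.  Coefficient vectors c are given blockwise,
  c i j being the j-th entry of c[i].\<close>

definition blk :: "(nat \<Rightarrow> nat \<Rightarrow> real^'d) \<Rightarrow> (nat \<Rightarrow> nat) \<Rightarrow> (nat \<Rightarrow> nat \<Rightarrow> real) \<Rightarrow> nat \<Rightarrow> real^'d" where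
  "blk B m c i = (\<Sum>j<m i. c i j *\<^sub>R B i j)"

definition dict_mult :: "nat \<Rightarrow> (nat \<Rightarrow> nat \<Rightarrow> real^'d) \<Rightarrow> (nat \<Rightarrow> nat) \<Rightarrow> (nat \<Rightarrow> nat \<Rightarrow> real) \<Rightarrow> real^'d" where
  "dict_mult n B m c = (\<Sum>i<n. blk B m c i)"

definition subsp :: "(nat \<Rightarrow> nat \<Rightarrow> real^'d) \<Rightarrow> (nat \<Rightarrow> nat) \<Rightarrow> nat \<Rightarrow> (real^'d) set" where
  "subsp B m i = span (B i ` {..<m i})"

definition lq_norm :: "real \<Rightarrow> real^'d \<Rightarrow> real" where
  "lq_norm q x = (\<Sum>j\<in>UNIV. \<bar>x $ j\<bar> powr q) powr (1 / q)"

definition subspace_coherence :: "(real^'d) set \<Rightarrow> (real^'d) set \<Rightarrow> real" where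
  "subspace_coherence S T =
     Sup {\<bar>x \<bullet> z\<bar> / (norm x * norm z) | x z. x \<in> S - {0} \<and> z \<in> T - {0}}"

definition mu_S :: "nat \<Rightarrow> (nat \<Rightarrow> nat \<Rightarrow> real^'d) \<Rightarrow> (nat \<Rightarrow> nat) \<Rightarrow> real" where
  "mu_S n B m = Sup {subspace_coherence (subsp B m i) (subsp B m j) | i j. i < n \<and> j < n \<and> i \<noteq> j}"

definition eps_q :: "real \<Rightarrow> nat \<Rightarrow> (nat \<Rightarrow> nat \<Rightarrow> real^'d) \<Rightarrow> (nat \<Rightarrow> nat) \<Rightarrow> real" where
  "eps_q q n B m = Inf {e. \<forall>i<n. \<forall>c. 
       (1 - e) * (lq_norm q (blk B m c i))\<^sup>2 \<le> (norm (blk B m c i))\<^sup>2 \<and>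
       (norm (blk B m c i))\<^sup>2 \<le> (1 + e) * (lq_norm q (blk B m c i))\<^sup>2}"

definition block_sparse_rep :: "nat \<Rightarrow> (nat \<Rightarrow> nat \<Rightarrow> real^'d) \<Rightarrow> (nat \<Rightarrow> nat) \<Rightarrow> nat \<Rightarrow> real^'d \<Rightarrow> nat set \<Rightarrow> (nat \<Rightarrow> real^'d) \<Rightarrow> bool" where
  "block_sparse_rep n B m k y Lam s \<longleftrightarrow>
     Lam \<subseteq> {..<n} \<and> card Lam \<le> k \<and> (\<forall>i\<in>Lam. s i \<in> subsp B m i - {0}) \<and> y = (\<Sum>i\<in>Lam. s i)"

definition unique_block_sparse :: "nat \<Rightarrow> (nat \<Rightarrow> nat \<Rightarrow> real^'d) \<Rightarrow> (nat \<Rightarrow> nat) \<Rightarrow> nat \<Rightarrow> bool" where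
  "unique_block_sparse n B m k \<longleftrightarrow>
     (\<forall>y Lam s Lam' s'. block_sparse_rep n B m k y Lam s \<longrightarrow> block_sparse_rep n B m k y Lam' s' \<longrightarrow>
        Lam = Lam' \<and> (\<forall>i\<in>Lam. s i = s' i))"

definition lq_l1_obj :: "real \<Rightarrow> nat \<Rightarrow> (nat \<Rightarrow> nat \<Rightarrow> real^'d) \<Rightarrow> (nat \<Rightarrow> nat) \<Rightarrow> (nat \<Rightarrow> nat \<Rightarrow> real) \<Rightarrow> real" where
  "lq_l1_obj q n B m c = (\<Sum>i<n. lq_norm q (blk B m c i))"

definition opt_lq_l1 :: "real \<Rightarrow> nat \<Rightarrow> (nat \<Rightarrow> nat \<Rightarrow> real^'d) \<Rightarrow> (nat \<Rightarrow> nat) \<Rightarrow> real^'d \<Rightarrow> (nat \<Rightarrow> nat \<Rightarrow> real) \<Rightarrow> bool" where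
  "opt_lq_l1 q n B m y c \<longleftrightarrow> y = dict_mult n B m c \<and>
     (\<forall>c'. y = dict_mult n B m c' \<longrightarrow> lq_l1_obj q n B m c \<le> lq_l1_obj q n B m c')"

end

theory Submission
  imports Defs
begin


lemma lq_nonneg: "lq_norm q x \<ge> 0"
  by (simp add: lq_norm_def)

lemma lq_zero: "q > 0 \<Longrightarrow> lq_norm q 0 = 0"
  by (simp add: lq_norm_def)

lemma lq_pow: assumes "q > 0" shows "(lq_norm q x) powr q = (\<Sum>j\<in>UNIV. \<bar>x $ j\<bar> powr q)"
  using assms by (simp add: lq_norm_def powr_powr sum_nonneg)

lemma lq_comp: assumes "q > 0" shows "\<bar>x $ j\<bar> \<le> lq_norm q x"
proof -
  have "\<bar>x $ j\<bar> powr q \<le> (\<Sum>j\<in>UNIV. \<bar>x $ j\<bar> powr q)"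
    by (rule member_le_sum) auto
  hence "(\<bar>x $ j\<bar> powr q) powr (1/q) \<le> (\<Sum>j\<in>UNIV. \<bar>x $ j\<bar> powr q) powr (1/q)"
    using assms by (intro powr_mono2) auto
  moreover have "(\<bar>x $ j\<bar> powr q) powr (1/q) = \<bar>x $ j\<bar>"
    using assms by (simp add: powr_powr)
  ultimately show ?thesis by (simp add: lq_norm_def)
qed

lemma lq_eq0: assumes "q > 0" "lq_norm q x = 0" shows "x = 0"
proof -
  have "\<forall>j. x $ j = 0" using lq_comp[OF assms(1), of x] assms(2)
    by (metis abs_le_zero_iff)
  thus ?thesis by (simp add: vec_eq_iff)
qed

lemma norm_le_lq: assumes "q > 0" shows "norm (x::real^'d) \<le> real CARD('d) * lq_norm q x"
proof -
  have "norm x \<le> (\<Sum>j\<in>UNIV. \<bar>x $ j\<bar>)" by (rule norm_le_l1_cart)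
  also have "\<dots> \<le> (\<Sum>j\<in>(UNIV::'d set). lq_norm q x)"
    by (rule sum_mono) (rule lq_comp[OF assms])
  finally show ?thesis by simp
qed

lemma powr_convex0:
  fixes x y t q :: real
  assumes q: "q \<ge> 1" and x: "x \<ge> 0" and y: "y \<ge> 0" and t: "0 \<le> t" "t \<le> 1"
  shows "((1-t)*x + t*y) powr q \<le> (1-t) * x powr q + t * y powr q"
proof -
  have tp: "\<And>s::real. 0 \<le> s \<Longrightarrow> s \<le> 1 \<Longrightarrow> s powr q \<le> s"
    by (metis powr_le1 q powr_mono2' le_less powr_one order.trans powr_mono' zero_le_one)
  show ?thesis
  proof (cases "x = 0 \<or> y = 0")
    case True
    then show ?thesis
    proof
      assume "x = 0"
      hence "((1-t)*x + t*y) powr q = t powr q * y powr q" using t y by (simp add: powr_mult)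
      also have "\<dots> \<le> t * y powr q" using tp[OF t] by (intro mult_right_mono) auto
      finally show ?thesis using \<open>x = 0\<close> by simp
    next
      assume "y = 0"
      hence "((1-t)*x + t*y) powr q = (1-t) powr q * x powr q" using t x by (simp add: powr_mult)
      also have "\<dots> \<le> (1-t) * x powr q" using tp[of "1-t"] t by (intro mult_right_mono) auto
      finally show ?thesis using \<open>y = 0\<close> by simp
    qed
  next
    case False
    hence "x \<in> {0<..}" "y \<in> {0<..}" using x y by auto
    from convex_onD[OF powr_convex[OF q] t this] show ?thesis by simp
  qed
qed


lemma lq_triangle:
  fixes a b :: "real^'d"
  assumes q: "q \<ge> 1"
  shows "lq_norm q (a + b) \<le> lq_norm q a + lq_norm q b"
proof -
  have q0: "q > 0" using q by simp
  define A where "A = lq_norm q a"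
  define Bn where "Bn = lq_norm q b"
  show ?thesis
  proof (cases "A = 0 \<or> Bn = 0")
    case True
    then show ?thesis
    proof
      assume "A = 0" hence "a = 0" using lq_eq0[OF q0] unfolding A_def by blast
      thus ?thesis using lq_nonneg[of q b] by (simp add: lq_nonneg)
    next
      assume "Bn = 0" hence "b = 0" using lq_eq0[OF q0] unfolding Bn_def by blast
      thus ?thesis using lq_nonneg[of q a] by (simp add: lq_nonneg)
    qed
  next
    case False
    have Ap: "A > 0" "Bn > 0" using False lq_nonneg unfolding A_def Bn_def
      by (metis less_eq_real_def)+
    define t where "t = Bn / (A + Bn)"
    have t: "0 \<le> t" "t \<le> 1" using Ap unfolding t_def by auto
    have t1: "1 - t = A / (A + Bn)" using Ap unfolding t_def by (simp add: field_simps)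
    have pt: "(\<bar>(a+b) $ j\<bar> / (A + Bn)) powr q \<le>
          (1-t) * (\<bar>a$j\<bar>/A) powr q + t * (\<bar>b$j\<bar>/Bn) powr q" for j
    proof -
      have "\<bar>(a+b) $ j\<bar> / (A + Bn) \<le> (1-t) * (\<bar>a$j\<bar>/A) + t * (\<bar>b$j\<bar>/Bn)"
      proof -
        have e: "(1-t) * (\<bar>a$j\<bar>/A) + t * (\<bar>b$j\<bar>/Bn) = (\<bar>a$j\<bar> + \<bar>b$j\<bar>) / (A + Bn)"
          unfolding t1 using Ap by (simp add: t_def add_divide_distrib)
        have "\<bar>(a+b) $ j\<bar> \<le> \<bar>a$j\<bar> + \<bar>b$j\<bar>" by (simp add: abs_triangle_ineq)
        thus ?thesis unfolding e using Ap by (simp add: divide_right_mono)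
      qed
      hence "(\<bar>(a+b) $ j\<bar> / (A + Bn)) powr q \<le> ((1-t) * (\<bar>a$j\<bar>/A) + t * (\<bar>b$j\<bar>/Bn)) powr q"
        using q0 Ap by (intro powr_mono2) auto
      also have "\<dots> \<le> (1-t) * (\<bar>a$j\<bar>/A) powr q + t * (\<bar>b$j\<bar>/Bn) powr q"
        using Ap t q by (intro powr_convex0) auto
      finally show ?thesis .
    qed
    have sa: "(\<Sum>j\<in>UNIV. (\<bar>a$j\<bar>/A) powr q) = 1"
    proof -
      have "(\<Sum>j\<in>UNIV. (\<bar>a$j\<bar>/A) powr q) = (\<Sum>j\<in>UNIV. \<bar>a$j\<bar> powr q) / A powr q"
        using Ap by (simp add: powr_divide sum_divide_distrib)
      also have "\<dots> = 1" using lq_pow[OF q0, of a] Ap by (metis A_def divide_self powr_gt_zero less_irrefl)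
      finally show ?thesis .
    qed
    have sb: "(\<Sum>j\<in>UNIV. (\<bar>b$j\<bar>/Bn) powr q) = 1"
    proof -
      have "(\<Sum>j\<in>UNIV. (\<bar>b$j\<bar>/Bn) powr q) = (\<Sum>j\<in>UNIV. \<bar>b$j\<bar> powr q) / Bn powr q"
        using Ap by (simp add: powr_divide sum_divide_distrib)
      also have "\<dots> = 1" using lq_pow[OF q0, of b] Ap by (metis Bn_def divide_self powr_gt_zero less_irrefl)
      finally show ?thesis .
    qed
    have "(\<Sum>j\<in>UNIV. (\<bar>(a+b) $ j\<bar> / (A + Bn)) powr q) \<le>
          (\<Sum>j\<in>UNIV. (1-t) * (\<bar>a$j\<bar>/A) powr q + t * (\<bar>b$j\<bar>/Bn) powr q)"
      by (rule sum_mono) (rule pt)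
    also have "\<dots> = (1-t) * (\<Sum>j\<in>UNIV. (\<bar>a$j\<bar>/A) powr q) + t * (\<Sum>j\<in>UNIV. (\<bar>b$j\<bar>/Bn) powr q)"
      by (simp add: sum.distrib sum_distrib_left)
    also have "\<dots> = 1" using sa sb by simp
    finally have le1: "(\<Sum>j\<in>UNIV. (\<bar>(a+b) $ j\<bar> / (A + Bn)) powr q) \<le> 1" .
    have "(\<Sum>j\<in>UNIV. (\<bar>(a+b) $ j\<bar> / (A + Bn)) powr q) = (\<Sum>j\<in>UNIV. \<bar>(a+b) $ j\<bar> powr q) / (A + Bn) powr q"
      using Ap by (simp add: powr_divide sum_divide_distrib)
    with le1 have "(\<Sum>j\<in>UNIV. \<bar>(a+b) $ j\<bar> powr q) \<le> (A + Bn) powr q"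
      using Ap by (simp add: divide_le_eq)
    hence "(\<Sum>j\<in>UNIV. \<bar>(a+b) $ j\<bar> powr q) powr (1/q) \<le> ((A + Bn) powr q) powr (1/q)"
      using q0 by (intro powr_mono2) (auto intro: sum_nonneg)
    also have "\<dots> = A + Bn" using Ap q0 by (simp add: powr_powr)
    finally show ?thesis unfolding lq_norm_def A_def Bn_def .
  qed
qed


lemma blk_in: "blk B m c i \<in> subsp B m i"
  unfolding blk_def subsp_def by (intro span_sum span_scale span_base) auto

lemma in_blk: assumes "v \<in> subsp B m i" shows "\<exists>c. v = blk B m c i"
proof -
  have "\<exists>f. v = (\<Sum>j<m i. f j *\<^sub>R B i j)"
    using assms unfolding subsp_def
  proof (induct rule: span_induct_alt)
    case base
    then show ?case by (rule exI[of _ "\<lambda>_. 0"]) simp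
  next
    case (step c x y)
    then obtain j0 where j0: "j0 < m i" "x = B i j0" by auto
    from step obtain f where f: "y = (\<Sum>j<m i. f j *\<^sub>R B i j)" by auto
    have "(\<Sum>j<m i. (f j + (if j = j0 then c else 0)) *\<^sub>R B i j)
        = y + (\<Sum>j<m i. (if j = j0 then c else 0) *\<^sub>R B i j)"
      by (simp add: f scaleR_add_left sum.distrib)
    also have "(\<Sum>j<m i. (if j = j0 then c else 0) *\<^sub>R B i j) = c *\<^sub>R x"
    proof -
      have "(\<Sum>j<m i. (if j = j0 then c else 0) *\<^sub>R B i j) = (\<Sum>j<m i. if j = j0 then c *\<^sub>R B i j else 0)"
        by (rule sum.cong) auto
      also have "\<dots> = c *\<^sub>R x" using j0 by simp
      finally show ?thesis .
    qed
    finally show ?case by (intro exI[of _ "\<lambda>j. f j + (if j = j0 then c else 0)"]) (simp add: add.commute)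
  qed
  then obtain f where "v = (\<Sum>j<m i. f j *\<^sub>R B i j)" by auto
  thus ?thesis unfolding blk_def by (intro exI[of _ "\<lambda>_. f"]) simp
qed

lemma coh_bound:
  assumes "x \<in> S" "z \<in> T"
  shows "\<bar>x \<bullet> z\<bar> \<le> subspace_coherence S T * (norm x * norm z)"
proof (cases "x = 0 \<or> z = 0")
  case True then show ?thesis by auto
next
  case False
  let ?C = "{\<bar>x \<bullet> z\<bar> / (norm x * norm z) | x z. x \<in> S - {0} \<and> z \<in> T - {0}}"
  have bdd: "bdd_above ?C"
  proof (rule bdd_aboveI[of _ 1])
    fix r assume "r \<in> ?C"
    then obtain a b where r: "r = \<bar>a \<bullet> b\<bar> / (norm a * norm b)" "a \<in> S" "b \<in> T" "a \<noteq> 0" "b \<noteq> 0" by auto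
    have "\<bar>a \<bullet> b\<bar> \<le> norm a * norm b" by (rule Cauchy_Schwarz_ineq2)
    thus "r \<le> 1" using r by (simp add: divide_le_eq)
  qed
  have "\<bar>x \<bullet> z\<bar> / (norm x * norm z) \<in> ?C" using assms False by blast
  hence "\<bar>x \<bullet> z\<bar> / (norm x * norm z) \<le> subspace_coherence S T"
    unfolding subspace_coherence_def using bdd by (rule cSup_upper)
  thus ?thesis using False by (simp add: divide_le_eq)
qed

lemma mu_props:
  fixes B :: "nat \<Rightarrow> nat \<Rightarrow> real^'d"
  assumes n: "1 < n" and ne: "\<forall>i<n. 0 < m i" and unit: "\<forall>i<n. \<forall>j<m i. norm (B i j) = 1"
  shows "0 \<le> mu_S n B m"
    and "\<And>i j x z. i < n \<Longrightarrow> j < n \<Longrightarrow> i \<noteq> j \<Longrightarrow> x \<in> subsp B m i \<Longrightarrow> z \<in> subsp B m j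
          \<Longrightarrow> \<bar>x \<bullet> z\<bar> \<le> mu_S n B m * (norm x * norm z)"
proof -
  let ?M = "{subspace_coherence (subsp B m i) (subsp B m j) | i j. i < n \<and> j < n \<and> i \<noteq> j}"
  have fin: "finite ?M"
  proof -
    have "?M \<subseteq> (\<lambda>(i,j). subspace_coherence (subsp B m i) (subsp B m j)) ` ({..<n} \<times> {..<n})"
      by auto
    thus ?thesis by (rule finite_subset) auto
  qed
  have up: "subspace_coherence (subsp B m i) (subsp B m j) \<le> mu_S n B m"
    if "i < n" "j < n" "i \<noteq> j" for i j
    unfolding mu_S_def using that by (intro cSup_upper bdd_above_finite[OF fin]) blast
  show "\<bar>x \<bullet> z\<bar> \<le> mu_S n B m * (norm x * norm z)"
    if "i < n" "j < n" "i \<noteq> j" "x \<in> subsp B m i" "z \<in> subsp B m j" for i j x z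
  proof -
    have "\<bar>x \<bullet> z\<bar> \<le> subspace_coherence (subsp B m i) (subsp B m j) * (norm x * norm z)"
      using that by (intro coh_bound)
    also have "\<dots> \<le> mu_S n B m * (norm x * norm z)"
      using up[OF that(1-3)] by (intro mult_right_mono) auto
    finally show ?thesis .
  qed
  have b0: "B 0 0 \<in> subsp B m 0" "B 1 0 \<in> subsp B m 1"
    using ne n unfolding subsp_def by (auto intro: span_base)
  have n0: "norm (B 0 0) = 1" "norm (B 1 0) = 1" using ne unit n by auto
  have "0 \<le> \<bar>B 0 0 \<bullet> B 1 0\<bar>" by simp
  also have "\<dots> \<le> subspace_coherence (subsp B m 0) (subsp B m 1) * (norm (B 0 0) * norm (B 1 0))"
    using b0 by (rule coh_bound)
  also have "\<dots> \<le> mu_S n B m" using up[of 0 1] n n0 by simp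
  finally show "0 \<le> mu_S n B m" .
qed


lemma eps_props:
  fixes B :: "nat \<Rightarrow> nat \<Rightarrow> real^'d"
  assumes q: "q \<ge> 1" and n: "0 < n" and ne: "0 < m 0" and u: "norm (B 0 0) = 1"
  shows "0 \<le> eps_q q n B m"
    and "\<And>i c. i < n \<Longrightarrow> (1 - eps_q q n B m) * (lq_norm q (blk B m c i))\<^sup>2 \<le> (norm (blk B m c i))\<^sup>2 \<and>
            (norm (blk B m c i))\<^sup>2 \<le> (1 + eps_q q n B m) * (lq_norm q (blk B m c i))\<^sup>2"
proof -
  have q0: "q > 0" using q by simp
  define E where "E = {e. \<forall>i<n. \<forall>c. 
       (1 - e) * (lq_norm q (blk B m c i))\<^sup>2 \<le> (norm (blk B m c i))\<^sup>2 \<and>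
       (norm (blk B m c i))\<^sup>2 \<le> (1 + e) * (lq_norm q (blk B m c i))\<^sup>2}"
  define \<epsilon> where "\<epsilon> = eps_q q n B m"
  have eI: "\<epsilon> = Inf E" unfolding \<epsilon>_def eps_q_def E_def ..
  define e0 where "e0 = (real CARD('d))\<^sup>2"
  have e0: "e0 \<ge> 1" unfolding e0_def by (simp add: Suc_le_eq)
  have "e0 \<in> E" unfolding E_def
  proof (intro CollectI allI impI conjI)
    fix i c assume "i < n"
    let ?v = "blk B m c i"
    have "(1 - e0) * (lq_norm q ?v)\<^sup>2 \<le> 0" using e0 by (intro mult_nonpos_nonneg) auto
    also have "0 \<le> (norm ?v)\<^sup>2" by simp
    finally show "(1 - e0) * (lq_norm q ?v)\<^sup>2 \<le> (norm ?v)\<^sup>2" .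
    have "(norm ?v)\<^sup>2 \<le> (real CARD('d) * lq_norm q ?v)\<^sup>2"
      by (intro power_mono norm_le_lq q0) simp
    also have "\<dots> = e0 * (lq_norm q ?v)\<^sup>2" unfolding e0_def by (simp add: power_mult_distrib)
    also have "\<dots> \<le> (1 + e0) * (lq_norm q ?v)\<^sup>2" by (intro mult_right_mono) auto
    finally show "(norm ?v)\<^sup>2 \<le> (1 + e0) * (lq_norm q ?v)\<^sup>2" .
  qed
  hence Ene: "E \<noteq> {}" by auto
  have key: "(norm v)\<^sup>2 / (lq_norm q v)\<^sup>2 - 1 \<le> \<epsilon> \<and> 1 - (norm v)\<^sup>2 / (lq_norm q v)\<^sup>2 \<le> \<epsilon>"
    if v: "v = blk B m c i" "i < n" "lq_norm q v > 0" for v c i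
  proof -
    let ?r = "(norm v)\<^sup>2 / (lq_norm q v)\<^sup>2"
    have L2: "(lq_norm q v)\<^sup>2 > 0" using v by simp
    have h: "?r - 1 \<le> e \<and> 1 - ?r \<le> e" if "e \<in> E" for e
    proof -
      from that v have a: "(1 - e) * (lq_norm q v)\<^sup>2 \<le> (norm v)\<^sup>2"
        and b: "(norm v)\<^sup>2 \<le> (1 + e) * (lq_norm q v)\<^sup>2" unfolding E_def by auto
      from a L2 have "1 - e \<le> ?r" by (simp add: le_divide_eq)
      moreover from b L2 have "?r \<le> 1 + e" by (simp add: divide_le_eq)
      ultimately show ?thesis by simp
    qed
    have "?r - 1 \<le> Inf E" using Ene h by (intro cInf_greatest) auto
    moreover have "1 - ?r \<le> Inf E" using Ene h by (intro cInf_greatest) auto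
    ultimately show ?thesis unfolding eI by simp
  qed
  show bnds: "(1 - eps_q q n B m) * (lq_norm q (blk B m c i))\<^sup>2 \<le> (norm (blk B m c i))\<^sup>2 \<and>
            (norm (blk B m c i))\<^sup>2 \<le> (1 + eps_q q n B m) * (lq_norm q (blk B m c i))\<^sup>2"
    if "i < n" for i c
  proof (cases "lq_norm q (blk B m c i) = 0")
    case True
    then have "blk B m c i = 0" using lq_eq0[OF q0] by blast
    with True show ?thesis by simp
  next
    case False
    let ?v = "blk B m c i"
    have Lp: "lq_norm q ?v > 0" using False lq_nonneg[of q ?v] by linarith
    hence L2: "(lq_norm q ?v)\<^sup>2 > 0" by simp
    from key[OF refl that Lp] have k1: "(norm ?v)\<^sup>2 / (lq_norm q ?v)\<^sup>2 \<le> 1 + \<epsilon>"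
      and k2: "1 - \<epsilon> \<le> (norm ?v)\<^sup>2 / (lq_norm q ?v)\<^sup>2" by auto
    from k1 L2 have "(norm ?v)\<^sup>2 \<le> (1 + \<epsilon>) * (lq_norm q ?v)\<^sup>2" by (simp add: divide_le_eq)
    moreover from k2 L2 have "(1 - \<epsilon>) * (lq_norm q ?v)\<^sup>2 \<le> (norm ?v)\<^sup>2" by (simp add: le_divide_eq)
    ultimately show ?thesis unfolding \<epsilon>_def by simp
  qed
  define c0 :: "nat \<Rightarrow> nat \<Rightarrow> real" where "c0 = (\<lambda>i j. if j = 0 then 1 else 0)"
  have v0: "blk B m c0 0 = B 0 0"
  proof -
    have "blk B m c0 0 = (\<Sum>j<m 0. if j = 0 then B 0 j else 0)"
      unfolding blk_def c0_def by (rule sum.cong) auto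
    also have "\<dots> = B 0 0" using ne by simp
    finally show ?thesis .
  qed
  have Lp0: "lq_norm q (B 0 0) > 0"
  proof -
    have "lq_norm q (B 0 0) \<noteq> 0" using lq_eq0[OF q0, of "B 0 0"] u by auto
    thus ?thesis using lq_nonneg[of q "B 0 0"] by linarith
  qed
  from key[OF v0[symmetric] n Lp0] show "0 \<le> eps_q q n B m" unfolding \<epsilon>_def by linarith
qed


lemma sum_zero_bound:
  fixes u :: "nat \<Rightarrow> 'a::real_inner"
  assumes fin: "finite I" and j: "j \<in> I" and s0: "sum u I = 0" and mu: "\<mu> \<ge> 0"
    and coh: "\<And>i. i \<in> I \<Longrightarrow> i \<noteq> j \<Longrightarrow> \<bar>u j \<bullet> u i\<bar> \<le> \<mu> * (norm (u j) * norm (u i))"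
  shows "(1 + \<mu>) * norm (u j) \<le> \<mu> * (\<Sum>i\<in>I. norm (u i))"
proof -
  let ?R = "I - {j}"
  have S: "(\<Sum>i\<in>I. norm (u i)) = norm (u j) + (\<Sum>i\<in>?R. norm (u i))"
    using fin j by (simp add: sum.remove)
  have "u j + sum u ?R = 0" using s0 fin j by (simp add: sum.remove)
  hence uj: "u j = - sum u ?R" by (simp add: eq_neg_iff_add_eq_0)
  have "(norm (u j))\<^sup>2 = u j \<bullet> u j" by (simp add: power2_norm_eq_inner)
  also have "\<dots> = - (\<Sum>i\<in>?R. u j \<bullet> u i)"
    by (subst (2) uj) (simp add: inner_sum_right)
  also have "\<dots> \<le> (\<Sum>i\<in>?R. \<bar>u j \<bullet> u i\<bar>)"
  proof -
    have "- (\<Sum>i\<in>?R. u j \<bullet> u i) \<le> \<bar>\<Sum>i\<in>?R. u j \<bullet> u i\<bar>" by simp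
    also have "\<dots> \<le> (\<Sum>i\<in>?R. \<bar>u j \<bullet> u i\<bar>)" by (rule sum_abs)
    finally show ?thesis .
  qed
  also have "\<dots> \<le> (\<Sum>i\<in>?R. \<mu> * (norm (u j) * norm (u i)))"
    by (rule sum_mono) (use coh in auto)
  also have "\<dots> = norm (u j) * (\<mu> * (\<Sum>i\<in>?R. norm (u i)))"
    by (simp add: sum_distrib_left mult_ac)
  finally have h: "norm (u j) * norm (u j) \<le> norm (u j) * (\<mu> * (\<Sum>i\<in>?R. norm (u i)))"
    by (simp add: power2_eq_square)
  have R0: "(\<Sum>i\<in>?R. norm (u i)) \<ge> 0" by (simp add: sum_nonneg)
  show ?thesis
  proof (cases "norm (u j) = 0")
    case True
    then show ?thesis using S R0 mu by simp
  next
    case False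
    hence "norm (u j) > 0" by simp
    with h have "norm (u j) \<le> \<mu> * (\<Sum>i\<in>?R. norm (u i))"
      by (simp add: mult_le_cancel_left)
    thus ?thesis unfolding S by (simp add: algebra_simps)
  qed
qed

lemma final_arith:
  fixes \<mu> \<alpha> \<beta> k A2 B2 Aq Bq :: real
  assumes mu: "\<mu> \<ge> 0" and a: "0 < \<alpha>" "\<alpha> \<le> \<beta>" and k: "k \<ge> 1"
    and coh: "(2*k-1)*\<mu>*\<beta>\<^sup>2 < \<alpha>\<^sup>2"
    and h1: "(1+\<mu>)*A2 \<le> k*\<mu>*(A2+B2)" and h2: "\<alpha>*Aq \<le> A2" and h3: "B2 \<le> \<beta>*Bq"
    and h4: "Bq \<le> Aq" and nn: "A2 \<ge> 0" "B2 \<ge> 0" "Aq \<ge> 0" "Bq \<ge> 0"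
  shows "B2 = 0"
proof -
  have b: "\<beta> > 0" using a by simp
  have "\<alpha>\<^sup>2 \<le> \<alpha>*\<beta>" using a by (simp add: power2_eq_square)
  with coh have "((2*k-1)*\<mu>*\<beta>) * \<beta> < \<alpha> * \<beta>" by (simp add: power2_eq_square mult_ac)
  hence c1: "(2*k-1)*\<mu>*\<beta> < \<alpha>" using b by (simp add: mult_less_cancel_right)
  have km: "(k-1)*\<mu> \<ge> 0" using k mu by simp
  have "(k-1)*\<mu>*\<alpha> \<le> (k-1)*\<mu>*\<beta>" using km a by (intro mult_left_mono) auto
  hence c2: "k*\<mu>*\<beta> < \<alpha>*(1-(k-1)*\<mu>)" using c1 by (simp add: algebra_simps)
  have "(2*k-1)*\<mu>*\<beta> < \<beta>" using c1 a(2) by (rule less_le_trans)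
  hence "(2*k-1)*\<mu> < 1" using b by (simp only: mult_less_cancel_right2)
  moreover have "(2*k-1)*\<mu> = (k-1)*\<mu> + k*\<mu>" by (simp add: algebra_simps)
  moreover have "k*\<mu> \<ge> 0" using mu k by simp
  ultimately have pos: "1-(k-1)*\<mu> > 0" by linarith
  have "(1-(k-1)*\<mu>)*(\<alpha>*Aq) \<le> (1-(k-1)*\<mu>)*A2"
    using h2 pos by (intro mult_left_mono) auto
  hence "\<alpha>*(1-(k-1)*\<mu>)*Aq \<le> (1-(k-1)*\<mu>)*A2" by (simp add: mult_ac)
  also have "\<dots> \<le> k*\<mu>*B2" using h1 by (simp add: algebra_simps)
  also have "\<dots> \<le> k*\<mu>*(\<beta>*Aq)"
  proof -
    have "\<beta>*Bq \<le> \<beta>*Aq" using h4 b by (intro mult_left_mono) auto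
    hence "B2 \<le> \<beta>*Aq" using h3 by linarith
    thus ?thesis using k mu by (intro mult_left_mono) auto
  qed
  finally have "(\<alpha>*(1-(k-1)*\<mu>) - k*\<mu>*\<beta>) * Aq \<le> 0" by (simp add: algebra_simps)
  hence "Aq \<le> 0" using c2 by (simp add: mult_le_0_iff)
  hence "Bq = 0" using h4 nn by simp
  thus ?thesis using h3 nn by simp
qed


theorem corollary3:
  fixes B :: "nat \<Rightarrow> nat \<Rightarrow> real^'d" and m :: "nat \<Rightarrow> nat" and n k :: nat and q :: real
  assumes q: "q \<ge> 1"
    and k: "0 < k" "k < n"
    and blocks_nonempty: "\<forall>i<n. 0 < m i"
    and unit_cols: "\<forall>i<n. \<forall>j<m i. norm (B i j) = 1"
    and indep: "\<forall>i<n. \<forall>j<n. i \<noteq> j \<longrightarrow> subsp B m i \<inter> subsp B m j = {0}"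
    and uniq: "unique_block_sparse n B m k"
    and coh: "(2 * real k - 1) * mu_S n B m < (1 - eps_q q n B m) / (1 + eps_q q n B m)"
  shows "\<forall>Lam y c. Lam \<subseteq> {..<n} \<and> card Lam = k \<and>
           y \<in> {\<Sum>i\<in>Lam. s i | s. \<forall>i\<in>Lam. s i \<in> subsp B m i} \<and>
           opt_lq_l1 q n B m y c
         \<longrightarrow> (\<forall>i<n. i \<notin> Lam \<longrightarrow> blk B m c i = 0)"
proof (rule allI, rule allI, rule allI, rule impI)
  fix Lam y c
  assume H: "Lam \<subseteq> {..<n} \<and> card Lam = k \<and>
           y \<in> {\<Sum>i\<in>Lam. s i | s. \<forall>i\<in>Lam. s i \<in> subsp B m i} \<and>
           opt_lq_l1 q n B m y c"
  hence Lsub: "Lam \<subseteq> {..<n}" and cardL: "card Lam = k"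
    and yS: "y \<in> {\<Sum>i\<in>Lam. s i | s. \<forall>i\<in>Lam. s i \<in> subsp B m i}"
    and opt: "opt_lq_l1 q n B m y c" by auto
  from yS obtain s where s1: "y = (\<Sum>i\<in>Lam. s i)" and s2: "\<forall>i\<in>Lam. s i \<in> subsp B m i" by auto
  have q0: "q > 0" using q by simp
  have finL: "finite Lam" using Lsub finite_subset by blast
  have n1: "1 < n" and n0: "0 < n" using k by auto
  have m0: "0 < m 0" and unit0: "norm (B 0 0) = 1" using blocks_nonempty unit_cols n0 by auto
  note eps = eps_props[where q=q and n=n and m=m and B=B, OF q n0 m0 unit0]
  define \<epsilon> where "\<epsilon> = eps_q q n B m"
  define \<mu> where "\<mu> = mu_S n B m"
  have mu0: "\<mu> \<ge> 0" unfolding \<mu>_def by (rule mu_props[OF n1 blocks_nonempty unit_cols])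
  have muc: "\<And>i j x z. i < n \<Longrightarrow> j < n \<Longrightarrow> i \<noteq> j \<Longrightarrow> x \<in> subsp B m i \<Longrightarrow> z \<in> subsp B m j
          \<Longrightarrow> \<bar>x \<bullet> z\<bar> \<le> \<mu> * (norm x * norm z)"
    unfolding \<mu>_def by (rule mu_props[OF n1 blocks_nonempty unit_cols])
  have e0: "0 \<le> \<epsilon>" unfolding \<epsilon>_def by (rule eps(1))
  have coh': "(2 * real k - 1) * \<mu> < (1 - \<epsilon>) / (1 + \<epsilon>)" using coh unfolding \<epsilon>_def \<mu>_def .
  have kk: "real k \<ge> 1" using k by simp
  have "(2 * real k - 1) * \<mu> \<ge> 0" using kk mu0 by simp
  hence "(1 - \<epsilon>) / (1 + \<epsilon>) > 0" using coh' by linarith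
  hence e1: "\<epsilon> < 1" using e0 by (simp add: zero_less_divide_iff)
  define \<alpha> where "\<alpha> = sqrt (1 - \<epsilon>)"
  define \<beta> where "\<beta> = sqrt (1 + \<epsilon>)"
  have ap: "\<alpha> > 0" using e1 unfolding \<alpha>_def by simp
  have ab: "\<alpha> \<le> \<beta>" using e0 unfolding \<alpha>_def \<beta>_def by simp
  have a2: "\<alpha>\<^sup>2 = 1 - \<epsilon>" using e1 unfolding \<alpha>_def by simp
  have b2: "\<beta>\<^sup>2 = 1 + \<epsilon>" using e0 unfolding \<beta>_def by simp
  have bp: "\<beta> > 0" using ap ab by simp
  have coh2: "(2 * real k - 1) * \<mu> * \<beta>\<^sup>2 < \<alpha>\<^sup>2"
    using coh' e0 unfolding a2 b2 by (simp add: pos_less_divide_eq)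
  have lo: "\<alpha> * lq_norm q v \<le> norm v" if iv: "i < n" "v \<in> subsp B m i" for i v
  proof -
    obtain cc where v: "v = blk B m cc i" using in_blk[OF iv(2)] by blast
    have "(1 - \<epsilon>) * (lq_norm q v)\<^sup>2 \<le> (norm v)\<^sup>2"
      using eps(2)[OF iv(1), of cc] unfolding v \<epsilon>_def by simp
    hence "(\<alpha> * lq_norm q v)\<^sup>2 \<le> (norm v)\<^sup>2" by (simp add: power_mult_distrib a2)
    thus ?thesis by (rule power2_le_imp_le) simp
  qed
  have up: "norm v \<le> \<beta> * lq_norm q v" if iv: "i < n" "v \<in> subsp B m i" for i v
  proof -
    obtain cc where v: "v = blk B m cc i" using in_blk[OF iv(2)] by blast
    have "(norm v)\<^sup>2 \<le> (1 + \<epsilon>) * (lq_norm q v)\<^sup>2"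
      using eps(2)[OF iv(1), of cc] unfolding v \<epsilon>_def by simp
    hence "(norm v)\<^sup>2 \<le> (\<beta> * lq_norm q v)\<^sup>2" by (simp add: power_mult_distrib b2)
    thus ?thesis by (rule power2_le_imp_le) (use bp lq_nonneg[of q v] in simp)
  qed
  define z where "z i = blk B m c i" for i
  have zS: "z i \<in> subsp B m i" for i unfolding z_def by (rule blk_in)
  have "\<forall>i\<in>Lam. \<exists>cc. s i = blk B m cc i" using s2 in_blk by blast
  then obtain cs where cs: "\<forall>i\<in>Lam. s i = blk B m (cs i) i" by metis
  define c' where "c' = (\<lambda>i j. if i \<in> Lam then cs i i j else 0)"
  have bc': "blk B m c' i = (if i \<in> Lam then s i else 0)" for i
    using cs by (auto simp: blk_def c'_def)
  have sumL: "(\<Sum>i<n. if i \<in> Lam then f i else 0) = sum f Lam" for f :: "nat \<Rightarrow> 'x::comm_monoid_add"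
  proof -
    have "(\<Sum>i<n. if i \<in> Lam then f i else 0) = sum f ({..<n} \<inter> Lam)"
      by (rule sum.inter_restrict[symmetric]) simp
    also have "{..<n} \<inter> Lam = Lam" using Lsub by blast
    finally show ?thesis .
  qed
  define N where "N = {..<n} - Lam"
  have finN: "finite N" unfolding N_def by simp
  have split: "sum f {..<n} = sum f Lam + sum f N" for f :: "nat \<Rightarrow> 'x::comm_monoid_add"
    unfolding N_def using sum.subset_diff[OF Lsub, of f] by (simp add: add.commute)
  have yc': "y = dict_mult n B m c'" unfolding dict_mult_def bc' sumL s1 ..
  have ydec: "y = (\<Sum>i<n. z i)" using opt unfolding opt_lq_l1_def dict_mult_def z_def by simp
  have "lq_l1_obj q n B m c \<le> lq_l1_obj q n B m c'" using opt yc' unfolding opt_lq_l1_def by blast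
  also have "lq_l1_obj q n B m c' = (\<Sum>i\<in>Lam. lq_norm q (s i))"
  proof -
    have "lq_l1_obj q n B m c' = (\<Sum>i<n. if i \<in> Lam then lq_norm q (s i) else 0)"
      unfolding lq_l1_obj_def bc' by (rule sum.cong) (auto simp: lq_zero[OF q0])
    thus ?thesis by (simp add: sumL)
  qed
  finally have o1: "(\<Sum>i<n. lq_norm q (z i)) \<le> (\<Sum>i\<in>Lam. lq_norm q (s i))"
    unfolding lq_l1_obj_def z_def .
  have tri: "(\<Sum>i\<in>Lam. lq_norm q (s i)) \<le> (\<Sum>i\<in>Lam. lq_norm q (z i)) + (\<Sum>i\<in>Lam. lq_norm q (s i - z i))"
  proof -
    have "(\<Sum>i\<in>Lam. lq_norm q (s i)) \<le> (\<Sum>i\<in>Lam. lq_norm q (z i) + lq_norm q (s i - z i))"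
    proof (rule sum_mono)
      fix i assume "i \<in> Lam"
      show "lq_norm q (s i) \<le> lq_norm q (z i) + lq_norm q (s i - z i)"
        using lq_triangle[OF q, of "z i" "s i - z i"] by simp
    qed
    thus ?thesis by (simp add: sum.distrib)
  qed
  define Aq where "Aq = (\<Sum>i\<in>Lam. lq_norm q (s i - z i))"
  define Bq where "Bq = (\<Sum>i\<in>N. lq_norm q (z i))"
  define A2 where "A2 = (\<Sum>i\<in>Lam. norm (s i - z i))"
  define B2 where "B2 = (\<Sum>i\<in>N. norm (z i))"
  have h4: "Bq \<le> Aq" using o1 tri split[of "\<lambda>i. lq_norm q (z i)"] unfolding Aq_def Bq_def by linarith
  define u where "u i = (if i \<in> Lam then s i - z i else - z i)" for i
  have uS: "u i \<in> subsp B m i" if "i < n" for i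
    using s2 zS unfolding u_def subsp_def by (auto intro: span_diff span_neg)
  have usum: "(\<Sum>i<n. u i) = 0"
  proof -
    have "(\<Sum>i<n. u i) = (\<Sum>i<n. (if i \<in> Lam then s i else 0) - z i)"
      unfolding u_def by (rule sum.cong) auto
    also have "\<dots> = (\<Sum>i<n. if i \<in> Lam then s i else 0) - (\<Sum>i<n. z i)"
      by (simp add: sum_subtractf)
    also have "\<dots> = 0" using sumL[of s] s1 ydec by simp
    finally show ?thesis .
  qed
  have Ssplit: "(\<Sum>i<n. norm (u i)) = A2 + B2"
    using split[of "\<lambda>i. norm (u i)"] unfolding A2_def B2_def u_def N_def by simp
  have each: "(1 + \<mu>) * norm (u j) \<le> \<mu> * (A2 + B2)" if "j \<in> Lam" for j
  proof -
    have jn: "j < n" using that Lsub by auto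
    have "(1 + \<mu>) * norm (u j) \<le> \<mu> * (\<Sum>i<n. norm (u i))"
    proof (rule sum_zero_bound[OF _ _ usum mu0])
      show "j \<in> {..<n}" using jn by simp
      fix i assume "i \<in> {..<n}" "i \<noteq> j"
      thus "\<bar>u j \<bullet> u i\<bar> \<le> \<mu> * (norm (u j) * norm (u i))"
        using muc[of j i "u j" "u i"] uS jn by auto
    qed simp
    thus ?thesis unfolding Ssplit .
  qed
  have h1: "(1 + \<mu>) * A2 \<le> real k * \<mu> * (A2 + B2)"
  proof -
    have "(1 + \<mu>) * A2 = (\<Sum>j\<in>Lam. (1 + \<mu>) * norm (u j))"
      unfolding A2_def u_def by (simp add: sum_distrib_left)
    also have "\<dots> \<le> (\<Sum>j\<in>Lam. \<mu> * (A2 + B2))" by (rule sum_mono) (rule each)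
    also have "\<dots> = real k * \<mu> * (A2 + B2)" using cardL by simp
    finally show ?thesis .
  qed
  have h2: "\<alpha> * Aq \<le> A2"
  proof -
    have "\<alpha> * Aq = (\<Sum>i\<in>Lam. \<alpha> * lq_norm q (s i - z i))" unfolding Aq_def by (simp add: sum_distrib_left)
    also have "\<dots> \<le> A2" unfolding A2_def
    proof (rule sum_mono)
      fix i assume i: "i \<in> Lam"
      hence "i < n" using Lsub by auto
      moreover have "s i - z i \<in> subsp B m i" using s2 zS i unfolding subsp_def by (auto intro: span_diff)
      ultimately show "\<alpha> * lq_norm q (s i - z i) \<le> norm (s i - z i)" by (rule lo)
    qed
    finally show ?thesis .
  qed
  have h3: "B2 \<le> \<beta> * Bq"
  proof -
    have "B2 \<le> (\<Sum>i\<in>N. \<beta> * lq_norm q (z i))" unfolding B2_def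
    proof (rule sum_mono)
      fix i assume i: "i \<in> N"
      hence "i < n" unfolding N_def by auto
      thus "norm (z i) \<le> \<beta> * lq_norm q (z i)" using zS by (rule up)
    qed
    also have "\<dots> = \<beta> * Bq" unfolding Bq_def by (simp add: sum_distrib_left)
    finally show ?thesis .
  qed
  have nn: "A2 \<ge> 0" "B2 \<ge> 0" "Aq \<ge> 0" "Bq \<ge> 0"
    unfolding A2_def B2_def Aq_def Bq_def by (auto intro: sum_nonneg lq_nonneg)
  have B20: "B2 = 0" by (rule final_arith[OF mu0 ap ab kk coh2 h1 h2 h3 h4 nn])
  have "\<forall>i\<in>N. norm (z i) = 0" using B20 finN unfolding B2_def
    by (subst (asm) sum_nonneg_eq_0_iff) auto
  thus "\<forall>i<n. i \<notin> Lam \<longrightarrow> blk B m c i = 0" unfolding N_def z_def by auto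
qed

end
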